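(* Let $N\ge 2$ and $n,m\ge 1$. Let $\{\mathcal{G}_k : k\in\mathcal{P}\}$, $\mathcal{P}=\{1,\ldots,Q\}$, be a finite family of undirected weighted graphs on the node set $\{1,\ldots,N\}$ with weights $a^k_{ij}=a^k_{ji}\ge 0$, $a^k_{ii}=0$. Let $\sigma:[0,\infty)\to\mathcal{P}$ be a right-continuous, piecewise constant switching signal whose consecutive switching instants are separated by at least a dwell time $T_{\min}>0$. Assume: (i) there exists $T>0$ such that for every $t_0\ge 0$ the union graph $\bigcup_{t\in[t_0,t_0+T)}\mathcal{G}_{\sigma(t)}$ contains a directed spanning tree (equivalently, since the graphs are undirected, is connected); (ii) $A\in\mathbb{R}^{n\times n}$, $B\in\mathbb{R}^{n\times m}$ and the pair $(A,B)$ is stabilizable; (iii) there exists a symmetric positive definite matrix $P\in\mathbb{R}^{n\times n}$ such that $A^{\mathrm{T}}P+PA\le 0$ and the pair $(B^{\mathrm{T}}P,A)$ is observable. Let $\phi>0$ and $K=B^{\mathrm{T}}P$, and consider $$\dot{x}_i=Ax_i+\phi BK\sum_{j=1}^N a_{ij}^{\sigma(t)}(x_j-x_i),\qquad i=1,\ldots,N,\ x_i\in\mathbb{R}^n.$$ Then synchronization is achieved: for every initial condition, $\lim_{t\to\infty}\|x_i(t)-x_j(t)\|=0$ for all $i,j\in\{1,\ldots,N\}$.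
   Context: For a weighted digraph with weights $a_{ij}\ge0$, $a_{ij}>0$ means that $(j,i)$ is an edge (information flows from $j$ to $i$). A directed path is a sequence of edges $(i_1,i_2),(i_2,i_3),\ldots,(i_{q-1},i_q)$. A digraph contains a directed spanning tree if some node has a directed path to every other node. The union of a family of graphs on the same node set has as edge set the union of their edge sets. An undirected graph is one with symmetric weights $a_{ij}=a_{ji}$; each undirected edge counts as edges in both directions. *)

theory Defs
  imports "HOL-Analysis.Analysis"
begin

text \<open>A real square matrix is Hurwitz if every (complex) eigenvalue has negative real part.\<close>
definition hurwitz :: "real^'n^'n \<Rightarrow> bool" where
  "hurwitz M \<longleftrightarrow>
     (\<forall>(l::complex) (v::complex^'n). v \<noteq> 0 \<and> (\<chi> i j. complex_of_real (M$i$j)) *v v = l *s v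
        \<longrightarrow> Re l < 0)"

text \<open>(A,B) stabilizable: some state feedback u = F x makes A + B F Hurwitz.\<close>
definition stabilizable :: "real^'n^'n \<Rightarrow> real^'m^'n \<Rightarrow> bool" where
  "stabilizable A B \<longleftrightarrow> (\<exists>F::real^'n^'m. hurwitz (A + B ** F))"

text \<open>(C,A) observable (Kalman rank condition): the observability matrix
  [C; C A; ...; C A^(n-1)] has trivial kernel, i.e. full column rank n.\<close>
definition observable :: "real^'n^'p \<Rightarrow> real^'n^'n \<Rightarrow> bool" where
  "observable C A \<longleftrightarrow>
     (\<forall>x::real^'n. (\<forall>k<CARD('n). C *v ((((*v) A) ^^ k) x) = 0) \<longrightarrow> x = 0)"

definition pos_def :: "real^'n^'n \<Rightarrow> bool" where
  "pos_def P \<longleftrightarrow> (\<forall>x. x \<noteq> 0 \<longrightarrow> x \<bullet> (P *v x) > 0)"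

definition neg_semidef :: "real^'n^'n \<Rightarrow> bool" where
  "neg_semidef M \<longleftrightarrow> (\<forall>x. x \<bullet> (M *v x) \<le> 0)"

text \<open>Right-continuous piecewise constant switching signal with dwell time Tmin:
  a sequence of instants s 0 = 0 < s 1 < ... with gaps at least Tmin, sig constant
  on each [s k, s (k+1)), values in {1..Q}.\<close>
definition switching_signal :: "(real \<Rightarrow> nat) \<Rightarrow> nat \<Rightarrow> real \<Rightarrow> bool" where
  "switching_signal sig Q Tmin \<longleftrightarrow>
     (\<forall>t\<ge>0. sig t \<in> {1..Q}) \<and>
     (\<exists>s::nat \<Rightarrow> real. s 0 = 0 \<and> (\<forall>k. s (Suc k) - s k \<ge> Tmin) \<and>
        (\<forall>k t. s k \<le> t \<and> t < s (Suc k) \<longrightarrow> sig t = sig (s k)))"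

text \<open>Edge set of the union graph over a time interval: (j,i) is an edge iff a_ij > 0
  for the active graph at some time in the interval.\<close>
definition union_edges ::
  "(nat \<Rightarrow> 'v \<Rightarrow> 'v \<Rightarrow> real) \<Rightarrow> (real \<Rightarrow> nat) \<Rightarrow> real set \<Rightarrow> ('v \<times> 'v) set" where
  "union_edges a sig I = {(j, i). \<exists>t\<in>I. a (sig t) i j > 0}"

text \<open>A digraph on the (finite) node type 'v contains a directed spanning tree iff
  some node has a directed path to every other node.\<close>
definition has_spanning_tree :: "('v \<times> 'v) set \<Rightarrow> bool" where
  "has_spanning_tree E \<longleftrightarrow> (\<exists>r. \<forall>i. i \<noteq> r \<longrightarrow> (r, i) \<in> E\<^sup>+)"

end

theory Submission
  imports Defs "HOL-Analysis.Analysis"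
begin

(* ---- part 1 ---- *)
lemma rmvt_strict:
  fixes f :: "real \<Rightarrow> real"
  assumes ab: "a \<le> b" and cont: "continuous_on {a..b} f"
    and der: "\<And>x. x \<in> {a..<b} \<Longrightarrow> (f has_real_derivative f' x) (at x within {x..})"
    and neg: "\<And>x. x \<in> {a..<b} \<Longrightarrow> f' x < 0"
  shows "f b \<le> f a"
proof -
  let ?Z = "{a..b} \<inter> f -` {..f a}"
  have cl: "closed ?Z" by (rule continuous_closed_preimage[OF cont]) auto
  have "compact ?Z" using cl by (auto simp: compact_eq_bounded_closed intro: bounded_Int)
  moreover have "a \<in> ?Z" using ab by auto
  ultimately obtain c where cZ: "c \<in> ?Z" and cmax: "\<And>y. y \<in> ?Z \<Longrightarrow> y \<le> c"
    using compact_attains_sup by (metis empty_iff)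
  show ?thesis
  proof (cases "c = b")
    case True then show ?thesis using cZ by auto
  next
    case False
    then have cb: "c \<in> {a..<b}" using cZ by auto
    have "((\<lambda>y. (f y - f c) / (y - c)) \<longlongrightarrow> f' c) (at c within {c..})"
      using der[OF cb] by (simp add: has_field_derivative_iff)
    then have "eventually (\<lambda>y. (f y - f c) / (y - c) < 0) (at c within {c..})"
      using neg[OF cb] by (simp add: order_tendstoD(2))
    then have "eventually (\<lambda>y. (f y - f c) / (y - c) < 0) (at_right c)"
      by (simp add: at_within_Ici_at_right)
    then obtain e where e: "e > c" and P: "\<And>y. c < y \<Longrightarrow> y < e \<Longrightarrow> (f y - f c) / (y - c) < 0"
      by (auto simp: eventually_at_right_field)
    define y where "y = min ((c + e)/2) b"
    have y1: "c < y" "y < e" "y \<le> b" using e cb by (auto simp: y_def min_def)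
    have "(f y - f c) / (y - c) < 0" using P y1 by auto
    then have "f y < f c" using y1 by (simp add: divide_less_0_iff)
    then have "y \<in> ?Z" using cZ y1 by auto
    then show ?thesis using cmax y1 by fastforce
  qed
qed

lemma rmvt:
  fixes f :: "real \<Rightarrow> real"
  assumes ab: "a \<le> b" and cont: "continuous_on {a..b} f"
    and der: "\<And>x. x \<in> {a..<b} \<Longrightarrow> (f has_real_derivative f' x) (at x within {x..})"
    and le: "\<And>x. x \<in> {a..<b} \<Longrightarrow> f' x \<le> M"
  shows "f b - f a \<le> M * (b - a)"
proof -
  have "f b - f a \<le> (M + e) * (b - a)" if e: "e > 0" for e
  proof -
    let ?g = "\<lambda>x. f x - (M + e) * (x - a)"
    have "?g b \<le> ?g a"
    proof (rule rmvt_strict[OF ab, where f' = "\<lambda>x. f' x - (M + e)"])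
      show "continuous_on {a..b} ?g" by (intro continuous_intros cont)
      fix x assume x: "x \<in> {a..<b}"
      show "(?g has_real_derivative f' x - (M + e)) (at x within {x..})"
        by (rule derivative_eq_intros der[OF x] | simp)+
      show "f' x - (M + e) < 0" using le[OF x] e by simp
    qed
    then show ?thesis by simp
  qed
  then have "\<forall>e>0. f b - f a \<le> M * (b - a) + e * (b - a)" by (simp add: algebra_simps)
  show ?thesis
  proof (cases "a = b")
    case True then show ?thesis by simp
  next
    case False
    then have ba: "b - a > 0" using ab by simp
    show ?thesis
    proof (rule field_le_epsilon)
      fix e :: real assume "e > 0"
      then have "e / (b - a) > 0" using ba by simp
      from \<open>\<forall>e>0. _\<close>[rule_format, OF this] show "f b - f a \<le> M * (b - a) + e" using ba by simp
    qed
  qed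
qed

(* ---- part 2 ---- *)
lemma vd_inner:
  fixes f g :: "real \<Rightarrow> 'a::real_inner"
  assumes "(f has_vector_derivative f') (at t within S)" "(g has_vector_derivative g') (at t within S)"
  shows "((\<lambda>t. inner (f t) (g t)) has_real_derivative (inner f' (g t) + inner (f t) g')) (at t within S)"
proof -
  have "((\<lambda>t. inner (f t) (g t)) has_derivative (\<lambda>h. inner (f t) (h *\<^sub>R g') + inner (h *\<^sub>R f') (g t))) (at t within S)"
    using assms unfolding has_vector_derivative_def by (intro has_derivative_inner) auto
  moreover have "(\<lambda>h. inner (f t) (h *\<^sub>R g') + inner (h *\<^sub>R f') (g t)) = (*) (inner f' (g t) + inner (f t) g')"
    by (auto simp: fun_eq_iff algebra_simps)
  ultimately show ?thesis by (simp add: has_field_derivative_def)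
qed

lemma rmvt_vec:
  fixes f :: "real \<Rightarrow> 'a::real_inner"
  assumes ab: "a \<le> b" and cont: "continuous_on {a..b} f"
    and der: "\<And>x. x \<in> {a..<b} \<Longrightarrow> (f has_vector_derivative f' x) (at x within {x..})"
    and le: "\<And>x. x \<in> {a..<b} \<Longrightarrow> norm (f' x) \<le> M"
  shows "norm (f b - f a) \<le> M * (b - a)"
proof -
  define u where "u = f b - f a"
  have "inner u (f b) - inner u (f a) \<le> (norm u * M) * (b - a)"
  proof (rule rmvt[OF ab, where f' = "\<lambda>x. inner u (f' x)"])
    show "continuous_on {a..b} (\<lambda>x. inner u (f x))" by (intro continuous_intros cont)
    fix x assume x: "x \<in> {a..<b}"
    show "((\<lambda>x. inner u (f x)) has_real_derivative inner u (f' x)) (at x within {x..})"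
      using vd_inner[OF has_vector_derivative_const der[OF x]] by simp
    have "inner u (f' x) \<le> norm u * norm (f' x)" by (rule norm_cauchy_schwarz)
    also have "\<dots> \<le> norm u * M" using le[OF x] by (simp add: mult_left_mono)
    finally show "inner u (f' x) \<le> norm u * M" .
  qed
  moreover have "inner u (f b) - inner u (f a) = norm u * norm u"
    by (simp add: u_def inner_diff_right[symmetric] flip: power2_eq_square power2_norm_eq_inner)
  ultimately have "norm u * norm u \<le> norm u * (M * (b - a))" by (simp add: algebra_simps)
  moreover have "0 \<le> M * (b - a)"
  proof (cases "a = b")
    case False
    then have "a \<in> {a..<b}" using ab by auto
    then have "0 \<le> M" using le[of a] norm_ge_zero[of "f' a"] by linarith
    then show ?thesis using ab by simp
  qed simp
  ultimately show ?thesis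
    by (cases "u = 0") (auto simp: u_def dest: mult_left_le_imp_le)
qed

(* ---- part 3 ---- *)
lemma pairsum:
  fixes y :: "'v::finite \<Rightarrow> 'a::real_inner" and w :: "'v \<Rightarrow> 'v \<Rightarrow> real"
  assumes sym: "\<And>i k. w i k = w k i"
  defines "V \<equiv> \<lambda>i. \<Sum>k\<in>UNIV. w i k *\<^sub>R (y k - y i)"
  shows "(\<Sum>i\<in>UNIV. \<Sum>j\<in>UNIV. inner (V i - V j) (y i - y j))
         = - real CARD('v) * (\<Sum>i\<in>UNIV. \<Sum>k\<in>UNIV. w i k * (norm (y i - y k))\<^sup>2)"
proof -
  have sumV: "(\<Sum>i\<in>UNIV. V i) = 0"
  proof -
    have "(\<Sum>i\<in>UNIV. V i) = (\<Sum>i\<in>UNIV. \<Sum>k\<in>UNIV. w i k *\<^sub>R y k) - (\<Sum>i\<in>UNIV. \<Sum>k\<in>UNIV. w i k *\<^sub>R y i)"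
      by (simp add: V_def scaleR_diff_right sum_subtractf)
    also have "(\<Sum>i\<in>UNIV. \<Sum>k\<in>UNIV. w i k *\<^sub>R y k) = (\<Sum>i\<in>UNIV. \<Sum>k\<in>UNIV. w i k *\<^sub>R y i)"
      by (subst sum.swap) (simp add: sym)
    finally show ?thesis by simp
  qed
  have "(\<Sum>i\<in>UNIV. \<Sum>j\<in>UNIV. inner (V i - V j) (y i - y j))
      = (\<Sum>i\<in>UNIV. \<Sum>j\<in>UNIV. inner (V i) (y i) + inner (V j) (y j) - inner (V i) (y j) - inner (V j) (y i))"
    by (simp add: inner_diff_left inner_diff_right algebra_simps)
  also have "\<dots> = 2 * real CARD('v) * (\<Sum>i\<in>UNIV. inner (V i) (y i)) - 2 * inner (\<Sum>i\<in>UNIV. V i) (\<Sum>i\<in>UNIV. y i)"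
    by (simp add: sum_subtractf sum.distrib inner_sum_left inner_sum_right sum_distrib_left algebra_simps)
       (subst sum.swap, simp add: sum_distrib_left)
  also have "\<dots> = 2 * real CARD('v) * (\<Sum>i\<in>UNIV. inner (V i) (y i))" using sumV by simp
  also have "(\<Sum>i\<in>UNIV. inner (V i) (y i)) = - (1/2) * (\<Sum>i\<in>UNIV. \<Sum>k\<in>UNIV. w i k * (norm (y i - y k))\<^sup>2)"
  proof -
    have e1: "(\<Sum>i\<in>UNIV. inner (V i) (y i)) = (\<Sum>i\<in>UNIV. \<Sum>k\<in>UNIV. w i k * inner (y k - y i) (y i))"
      by (simp add: V_def inner_sum_left)
    have e2: "(\<Sum>i\<in>UNIV. \<Sum>k\<in>UNIV. w i k * inner (y k - y i) (y i)) = (\<Sum>i\<in>UNIV. \<Sum>k\<in>UNIV. w i k * inner (y i - y k) (y k))"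
      by (subst sum.swap) (simp add: sym)
    have "2 * (\<Sum>i\<in>UNIV. inner (V i) (y i)) = (\<Sum>i\<in>UNIV. \<Sum>k\<in>UNIV. w i k * (inner (y k - y i) (y i) + inner (y i - y k) (y k)))"
      using e1 e2 by (simp add: distrib_left sum.distrib)
    also have "\<dots> = (\<Sum>i\<in>UNIV. \<Sum>k\<in>UNIV. - (w i k * (norm (y i - y k))\<^sup>2))"
      by (intro sum.cong refl) (simp add: power2_norm_eq_inner inner_diff_left inner_diff_right algebra_simps inner_commute)
    finally show ?thesis by (simp add: sum_negf)
  qed
  finally show ?thesis by simp
qed

(* ---- part 4 ---- *)
locale sync =
  fixes a :: "nat \<Rightarrow> 'v::finite \<Rightarrow> 'v \<Rightarrow> real"
    and Q :: nat
    and sig :: "real \<Rightarrow> nat"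
    and Tmin T phi :: real
    and A :: "real^'n^'n" and B :: "real^'m^'n" and P :: "real^'n^'n"
    and x :: "real \<Rightarrow> 'v \<Rightarrow> real^'n"
  assumes a_nonneg: "\<And>k i j. k \<in> {1..Q} \<Longrightarrow> a k i j \<ge> 0"
    and a_sym: "\<And>k i j. k \<in> {1..Q} \<Longrightarrow> a k i j = a k j i"
    and Tmin_pos: "Tmin > 0"
    and sw: "switching_signal sig Q Tmin"
    and T_pos: "T > 0"
    and conn: "\<And>t0. t0 \<ge> 0 \<Longrightarrow> has_spanning_tree (union_edges a sig {t0..<t0 + T})"
    and P_sym: "transpose P = P"
    and P_pd: "pos_def P"
    and lyap: "neg_semidef (transpose A ** P + P ** A)"
    and obs: "observable (transpose B ** P) A"
    and phi_pos: "phi > 0"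
    and x_cont: "continuous_on {0..} x"
    and x_ode: "\<And>i t. t \<ge> 0 \<Longrightarrow>
        ((\<lambda>s. x s i) has_vector_derivative
           (A *v x t i + phi *\<^sub>R ((B ** (transpose B ** P)) *v
              (\<Sum>j\<in>UNIV. a (sig t) i j *\<^sub>R (x t j - x t i)))))
         (at t within {t..})"
begin

definition "K = transpose B ** P"
definition "U t i = (\<Sum>j\<in>UNIV. a (sig t) i j *\<^sub>R (x t j - x t i))"
definition "vel t i = A *v x t i + phi *\<^sub>R ((B ** K) *v U t i)"
definition "w t i j = phi *\<^sub>R (B *v (K *v (U t i - U t j)))"
definition "F t = (\<Sum>i\<in>UNIV. \<Sum>j\<in>UNIV. inner (x t i - x t j) (P *v (x t i - x t j)))"
definition "Dis t = (\<Sum>i\<in>UNIV. \<Sum>j\<in>UNIV. a (sig t) i j * (norm (K *v (x t i - x t j)))\<^sup>2)"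

lemma sig_range: "t \<ge> 0 \<Longrightarrow> sig t \<in> {1..Q}"
  using sw unfolding switching_signal_def by blast

lemma deriv_x: "t \<ge> 0 \<Longrightarrow> ((\<lambda>s. x s i) has_vector_derivative vel t i) (at t within {t..})"
  using x_ode[of t i] by (simp add: vel_def U_def K_def)

lemma deriv_d: "t \<ge> 0 \<Longrightarrow> ((\<lambda>s. x s i - x s j) has_vector_derivative (vel t i - vel t j)) (at t within {t..})"
  by (intro has_vector_derivative_diff deriv_x)

lemma cont_xi: "continuous_on {0..} (\<lambda>t. x t i)"
  by (rule continuous_on_product_then_coordinatewise[OF x_cont])

lemma cont_d: "continuous_on S (\<lambda>t. x t i - x t j)" if "S \<subseteq> {0..}"
  using that by (intro continuous_intros continuous_on_subset[OF cont_xi]) auto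

lemma vel_diff: "vel t i - vel t j = A *v (x t i - x t j) + w t i j"
  by (simp add: vel_def w_def matrix_vector_mult_diff_distrib matrix_vector_mul_assoc[symmetric]
        scaleR_diff_right algebra_simps)

lemma I1: "inner (B *v z) (P *v d) = inner z (K *v d)"
proof -
  have "inner (B *v z) (P *v d) = inner (z v* transpose B) (P *v d)" by simp
  also have "\<dots> = inner z (transpose B *v (P *v d))" by (rule dot_lmul_matrix)
  finally show ?thesis by (simp add: K_def matrix_vector_mul_assoc)
qed

lemma I2: "inner d (P *v y) = inner (P *v d) y"
proof -
  have "inner d (P *v y) = inner (d v* P) y" by (simp add: dot_lmul_matrix)
  also have "d v* P = transpose P *v d" by simp
  finally show ?thesis using P_sym by simp
qed

lemma I3: "inner (A *v d) (P *v d) + inner d (P *v (A *v d)) = inner d ((transpose A ** P + P ** A) *v d)"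
proof -
  have "inner (A *v d) (P *v d) = inner (d v* transpose A) (P *v d)" by simp
  also have "\<dots> = inner d (transpose A *v (P *v d))" by (rule dot_lmul_matrix)
  finally show ?thesis
    by (simp add: matrix_vector_mul_assoc matrix_vector_mult_add_rdistrib inner_add_right)
qed

lemma KU: "K *v U t i = (\<Sum>k\<in>UNIV. a (sig t) i k *\<^sub>R (K *v x t k - K *v x t i))"
  by (simp add: U_def vec.sum matrix_vector_mult_scaleR matrix_vector_mult_diff_distrib)

lemma pair_term:
  "inner (vel t i - vel t j) (P *v (x t i - x t j)) + inner (x t i - x t j) (P *v (vel t i - vel t j))
   = inner (x t i - x t j) ((transpose A ** P + P ** A) *v (x t i - x t j))
     + 2 * phi * inner (K *v U t i - K *v U t j) (K *v x t i - K *v x t j)"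
proof -
  define d where "d = x t i - x t j"
  define z where "z = K *v (U t i - U t j)"
  have "vel t i - vel t j = A *v d + phi *\<^sub>R (B *v z)"
    by (simp add: vel_diff w_def d_def z_def)
  then have "inner (vel t i - vel t j) (P *v d) + inner d (P *v (vel t i - vel t j))
     = (inner (A *v d) (P *v d) + inner d (P *v (A *v d))) + phi * (inner (B *v z) (P *v d) + inner d (P *v (B *v z)))"
    by (simp add: inner_add_left inner_add_right matrix_vector_right_distrib matrix_vector_mult_scaleR distrib_left)
  also have "inner d (P *v (B *v z)) = inner z (K *v d)"
    by (subst I2, subst inner_commute, rule I1)
  also have "inner (B *v z) (P *v d) = inner z (K *v d)" by (rule I1)
  also note I3
  finally show ?thesis
    by (simp add: d_def z_def matrix_vector_mult_diff_distrib)
qed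

end

(* ---- part 5 ---- *)
context sync begin

definition "F' t = (\<Sum>i\<in>UNIV. \<Sum>j\<in>UNIV. inner (vel t i - vel t j) (P *v (x t i - x t j)) + inner (x t i - x t j) (P *v (vel t i - vel t j)))"

lemma F_deriv: "t \<ge> 0 \<Longrightarrow> (F has_real_derivative F' t) (at t within {t..})"
  unfolding F_def F'_def
  apply (intro DERIV_sum vd_inner deriv_d)
   apply simp
  apply (rule bounded_linear.has_vector_derivative[OF matrix_vector_mul_bounded_linear])
  apply (intro deriv_d)
  apply simp
  done

lemma Dis_nonneg: "t \<ge> 0 \<Longrightarrow> Dis t \<ge> 0"
  unfolding Dis_def using a_nonneg sig_range by (intro sum_nonneg mult_nonneg_nonneg) auto

lemma F'_eq: "t \<ge> 0 \<Longrightarrow> F' t = (\<Sum>i\<in>UNIV. \<Sum>j\<in>UNIV. inner (x t i - x t j) ((transpose A ** P + P ** A) *v (x t i - x t j)))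
    - 2 * phi * real CARD('v) * Dis t"
proof -
  assume t: "t \<ge> 0"
  have sym: "\<And>i k. a (sig t) i k = a (sig t) k i" using a_sym sig_range[OF t] by blast
  have ps: "(\<Sum>i\<in>UNIV. \<Sum>j\<in>UNIV. inner (K *v U t i - K *v U t j) (K *v x t i - K *v x t j))
        = - real CARD('v) * Dis t"
    using pairsum[of "a (sig t)" "\<lambda>k. K *v x t k", OF sym]
    by (simp add: KU Dis_def matrix_vector_mult_diff_distrib)
  have "F' t = (\<Sum>i\<in>UNIV. \<Sum>j\<in>UNIV. inner (x t i - x t j) ((transpose A ** P + P ** A) *v (x t i - x t j))
     + 2 * phi * inner (K *v U t i - K *v U t j) (K *v x t i - K *v x t j))"
    unfolding F'_def by (simp add: pair_term)
  also have "\<dots> = (\<Sum>i\<in>UNIV. \<Sum>j\<in>UNIV. inner (x t i - x t j) ((transpose A ** P + P ** A) *v (x t i - x t j)))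
     + 2 * phi * (\<Sum>i\<in>UNIV. \<Sum>j\<in>UNIV. inner (K *v U t i - K *v U t j) (K *v x t i - K *v x t j))"
    by (simp add: sum.distrib sum_distrib_left)
  finally show ?thesis using ps by simp
qed

lemma F'_le: "t \<ge> 0 \<Longrightarrow> F' t \<le> - phi * Dis t"
proof -
  assume t: "t \<ge> 0"
  have "(\<Sum>i\<in>UNIV. \<Sum>j\<in>UNIV. inner (x t i - x t j) ((transpose A ** P + P ** A) *v (x t i - x t j))) \<le> 0"
    using lyap unfolding neg_semidef_def by (intro sum_nonpos) auto
  moreover have "phi * Dis t \<le> 2 * phi * real CARD('v) * Dis t"
  proof -
    have "CARD('v) > 0" by simp
    then have "1 \<le> 2 * real CARD('v)" by linarith
    then have "phi * Dis t * 1 \<le> phi * Dis t * (2 * real CARD('v))"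
      using phi_pos Dis_nonneg[OF t] by (intro mult_left_mono) auto
    then show ?thesis by (simp add: algebra_simps)
  qed
  ultimately show ?thesis using F'_eq[OF t] by linarith
qed

lemma cont_Pd: "continuous_on S (\<lambda>t. M *v (x t i - x t j))" if "S \<subseteq> {0..}"
  by (rule bounded_linear.continuous_on[OF matrix_vector_mul_bounded_linear cont_d[OF that]])

lemma F_cont: "continuous_on S F" if "S \<subseteq> {0..}"
  unfolding F_def using that by (intro continuous_on_sum continuous_on_inner cont_d cont_Pd) auto

lemma F_mono: "0 \<le> t1 \<Longrightarrow> t1 \<le> t2 \<Longrightarrow> F t2 \<le> F t1"
proof -
  assume t: "0 \<le> t1" "t1 \<le> t2"
  have "F t2 - F t1 \<le> 0 * (t2 - t1)"
  proof (rule rmvt[OF t(2) F_cont])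
    show "{t1..t2} \<subseteq> {0..}" using t by auto
    fix s assume s: "s \<in> {t1..<t2}"
    then have s0: "s \<ge> 0" using t by auto
    show "(F has_real_derivative F' s) (at s within {s..})" by (rule F_deriv[OF s0])
    have "phi * Dis s \<ge> 0" using phi_pos Dis_nonneg[OF s0] by simp
    then show "F' s \<le> 0" using F'_le[OF s0] by linarith
  qed
  then show ?thesis by simp
qed

end

(* ---- part 6 ---- *)
lemma mat_bound: "\<exists>C>0. \<forall>z. norm ((M::real^'a^'b) *v z) \<le> C * norm z"
  using bounded_linear.pos_bounded[OF matrix_vector_mul_bounded_linear[of M]]
  by (auto simp: mult.commute)

lemma sphere_lower:
  fixes g :: "real^'n \<Rightarrow> real"
  assumes cont: "continuous_on UNIV g" and pos: "\<And>v. v \<noteq> 0 \<Longrightarrow> g v > 0"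
    and hom: "\<And>r v. r > 0 \<Longrightarrow> g (r *\<^sub>R v) = r ^ p * g v" and g0: "g 0 \<ge> 0" and p: "p > 0"
  shows "\<exists>c>0. \<forall>v. c * norm v ^ p \<le> g v"
proof -
  have "sphere (0::real^'n) 1 \<noteq> {}" by simp
  then obtain v0 where v0: "v0 \<in> sphere 0 1" and vmin: "\<And>y. y \<in> sphere 0 1 \<Longrightarrow> g v0 \<le> g y"
    using continuous_attains_inf[OF compact_sphere _ continuous_on_subset[OF cont]] by blast
  have "v0 \<noteq> 0" using v0 by auto
  then have c: "g v0 > 0" by (rule pos)
  show ?thesis
  proof (intro exI[of _ "g v0"] conjI allI c)
    fix v :: "real^'n"
    show "g v0 * norm v ^ p \<le> g v"
    proof (cases "v = 0")
      case True then show ?thesis using g0 p by (simp add: zero_power)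
    next
      case False
      then have nv: "norm v > 0" by simp
      have "(1 / norm v) *\<^sub>R v \<in> sphere 0 1" using False by (simp add: norm_divide)
      then have "g v0 \<le> g ((1 / norm v) *\<^sub>R v)" by (rule vmin)
      also have "\<dots> = (1 / norm v) ^ p * g v" using nv by (intro hom) simp
      finally have "g v0 * norm v ^ p \<le> (1 / norm v) ^ p * g v * norm v ^ p"
        using nv by (intro mult_right_mono) auto
      also have "\<dots> = g v" using nv by (simp add: power_one_over field_simps)
      finally show ?thesis .
    qed
  qed
qed

lemma pd_lower:
  assumes "pos_def (P::real^'n^'n)"
  shows "\<exists>c>0. \<forall>v. c * norm v ^ 2 \<le> inner v (P *v v)"
proof (rule sphere_lower)
  show "continuous_on UNIV (\<lambda>v. inner v (P *v v))" by (intro continuous_intros)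
  show "\<And>v. v \<noteq> 0 \<Longrightarrow> inner v (P *v v) > 0" using assms unfolding pos_def_def by auto
  show "\<And>r v. r > 0 \<Longrightarrow> inner (r *\<^sub>R v) (P *v (r *\<^sub>R v)) = r ^ 2 * inner v (P *v v)"
    by (simp add: matrix_vector_mult_scaleR power2_eq_square)
qed auto

(* ---- part 7 ---- *)
context sync begin

definition "sq = (SOME s::nat \<Rightarrow> real. s 0 = 0 \<and> (\<forall>k. s (Suc k) - s k \<ge> Tmin) \<and>
        (\<forall>k t. s k \<le> t \<and> t < s (Suc k) \<longrightarrow> sig t = sig (s k)))"

lemma sq_props: "sq 0 = 0" "\<And>k. sq (Suc k) - sq k \<ge> Tmin"
  "\<And>k t. sq k \<le> t \<Longrightarrow> t < sq (Suc k) \<Longrightarrow> sig t = sig (sq k)"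
  using someI_ex[OF sw[unfolded switching_signal_def, THEN conjunct2]] unfolding sq_def by blast+

lemma sq_ge: "sq k \<ge> real k * Tmin"
proof (induction k)
  case 0 then show ?case using sq_props(1) by simp
next
  case (Suc k) then show ?case using sq_props(2)[of k] by (simp add: algebra_simps)
qed

lemma sq_nonneg: "sq k \<ge> 0"
  using sq_ge[of k] Tmin_pos by (smt (verit) mult_nonneg_nonneg of_nat_0_le_iff)

lemma sq_find: "t \<ge> 0 \<Longrightarrow> \<exists>k. sq k \<le> t \<and> t < sq (Suc k)"
proof -
  assume t: "t \<ge> 0"
  obtain n :: nat where n: "t / Tmin < real n" using reals_Archimedean2 by blast
  then have "t < real n * Tmin" using Tmin_pos by (simp add: field_simps)
  then have tn: "t < sq n" using sq_ge[of n] by linarith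
  have "\<forall>t. 0 \<le> t \<longrightarrow> t < sq n \<longrightarrow> (\<exists>k. sq k \<le> t \<and> t < sq (Suc k))"
  proof (induction n)
    case 0 then show ?case using sq_props(1) by simp
  next
    case (Suc n) then show ?case by (metis not_le)
  qed
  then show ?thesis using t tn by blast
qed

lemma good_edge: "t \<ge> 0 \<Longrightarrow> \<exists>t'. 0 \<le> t' \<and> t - Tmin/2 \<le> t' \<and> t' \<le> t \<and> (\<forall>s\<in>{t'..t'+Tmin/2}. sig s = sig t)"
proof -
  assume t: "t \<ge> 0"
  then obtain k where k: "sq k \<le> t" "t < sq (Suc k)" using sq_find by blast
  define t' where "t' = max (sq k) (t - Tmin/2)"
  have "\<forall>s\<in>{t'..t'+Tmin/2}. sig s = sig t"
  proof
    fix s assume s: "s \<in> {t'..t'+Tmin/2}"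
    have "sq k \<le> s" using s by (auto simp: t'_def)
    moreover have "s < sq (Suc k)"
    proof (cases "sq k \<ge> t - Tmin/2")
      case True
      then have "s \<le> sq k + Tmin/2" using s by (auto simp: t'_def)
      then show ?thesis using sq_props(2)[of k] Tmin_pos by linarith
    next
      case False
      then have "s \<le> t" using s by (auto simp: t'_def)
      then show ?thesis using k by linarith
    qed
    ultimately have "sig s = sig (sq k)" by (rule sq_props(3))
    moreover have "sig t = sig (sq k)" using k by (rule sq_props(3))
    ultimately show "sig s = sig t" by simp
  qed
  moreover have "0 \<le> t'" using sq_nonneg[of k] by (auto simp: t'_def)
  moreover have "t - Tmin/2 \<le> t'" unfolding t'_def by simp
  moreover have "t' \<le> t" unfolding t'_def using k Tmin_pos by simp
  ultimately show ?thesis by blast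
qed

lemma a_max: "\<exists>amax. \<forall>t\<ge>0. \<forall>i j. a (sig t) i j \<le> amax"
proof -
  define S where "S = (\<lambda>(k,i,j). a k i j) ` ({1..Q} \<times> (UNIV::'v set) \<times> (UNIV::'v set))"
  have fin: "finite S" unfolding S_def by simp
  have mem: "a k i j \<in> S" if "k \<in> {1..Q}" for k i j
    unfolding S_def by (rule image_eqI[where x="(k,i,j)"]) (use that in auto)
  have "a (sig t) i j \<le> Max S" if "t \<ge> 0" for t i j
    using mem[OF sig_range[OF that]] fin by (intro Max_ge)
  then show ?thesis by blast
qed

lemma a_min: "\<exists>amin>0. \<forall>t\<ge>0. \<forall>i j. a (sig t) i j > 0 \<longrightarrow> amin \<le> a (sig t) i j"
proof -
  define S where "S = (\<lambda>(k,i,j). a k i j) ` ({1..Q} \<times> (UNIV::'v set) \<times> (UNIV::'v set))"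
  define S' where "S' = insert 1 {r\<in>S. r > 0}"
  have fin: "finite S'" unfolding S'_def S_def by simp
  have mem: "a k i j \<in> S" if "k \<in> {1..Q}" for k i j
    unfolding S_def by (rule image_eqI[where x="(k,i,j)"]) (use that in auto)
  have pos: "Min S' > 0" using fin by (subst Min_gr_iff) (auto simp: S'_def)
  have "Min S' \<le> a (sig t) i j" if "t \<ge> 0" "a (sig t) i j > 0" for t i j
    using mem[OF sig_range[OF that(1)]] fin that(2) by (intro Min_le) (auto simp: S'_def)
  then show ?thesis using pos by blast
qed

lemma F_nonneg: "F t \<ge> 0"
  unfolding F_def using P_pd unfolding pos_def_def
  by (intro sum_nonneg) (metis inner_zero_left less_eq_real_def matrix_vector_mult_0_right)

lemma term_le_F: "inner (x t i - x t j) (P *v (x t i - x t j)) \<le> F t"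
proof -
  have nn: "\<And>v. inner v (P *v v) \<ge> 0" using P_pd unfolding pos_def_def
    by (metis inner_zero_left less_eq_real_def matrix_vector_mult_0_right)
  have "inner (x t i - x t j) (P *v (x t i - x t j)) \<le> (\<Sum>j\<in>UNIV. inner (x t i - x t j) (P *v (x t i - x t j)))"
    by (rule member_le_sum) (auto simp: nn)
  also have "\<dots> \<le> F t" unfolding F_def by (rule member_le_sum) (auto intro: sum_nonneg simp: nn)
  finally show ?thesis .
qed

lemma d_bound: "\<exists>Bd. \<forall>t\<ge>0. \<forall>i j. norm (x t i - x t j) \<le> Bd"
proof -
  obtain cP where cP: "cP > 0" "\<And>v. cP * norm v ^ 2 \<le> inner v (P *v v)" using pd_lower[OF P_pd] by blast
  have "norm (x t i - x t j) \<le> sqrt (F 0 / cP)" if "t \<ge> 0" for t i j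
  proof (rule real_le_rsqrt)
    have "cP * norm (x t i - x t j) ^ 2 \<le> F 0"
      using cP(2) term_le_F F_mono[OF order_refl that] by (meson order_trans)
    then show "norm (x t i - x t j) ^ 2 \<le> F 0 / cP" using cP(1) by (simp add: field_simps)
  qed
  then show ?thesis by blast
qed

lemma KU_bound:
  assumes t: "t \<ge> 0" and e: "e \<ge> 0" and amax: "\<forall>t\<ge>0. \<forall>i j. a (sig t) i j \<le> amax"
    and h: "\<And>k. a (sig t) i k > 0 \<Longrightarrow> norm (K *v (x t k - x t i)) \<le> e"
  shows "norm (K *v U t i) \<le> real CARD('v) * amax * e"
proof -
  have "norm (K *v U t i) \<le> (\<Sum>k\<in>UNIV. norm (a (sig t) i k *\<^sub>R (K *v x t k - K *v x t i)))"
    unfolding KU by (rule norm_sum)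
  also have "\<dots> \<le> (\<Sum>k\<in>(UNIV::'v set). amax * e)"
  proof (rule sum_mono)
    fix k
    have a0: "a (sig t) i k \<ge> 0" using a_nonneg sig_range[OF t] by blast
    have am: "a (sig t) i k \<le> amax" using amax t by blast
    show "norm (a (sig t) i k *\<^sub>R (K *v x t k - K *v x t i)) \<le> amax * e"
    proof (cases "a (sig t) i k > 0")
      case True
      then have "norm (K *v (x t k - x t i)) \<le> e" by (rule h)
      then show ?thesis using a0 am e
        by (simp add: matrix_vector_mult_diff_distrib mult_mono)
    next
      case False
      then have "a (sig t) i k = 0" using a0 by simp
      then show ?thesis using a0 am e by simp
    qed
  qed
  also have "\<dots> = real CARD('v) * amax * e" by simp
  finally show ?thesis .
qed

lemma w_bound:
  assumes "\<And>z. norm (B *v z) \<le> CB * norm z" "CB \<ge> 0"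
  shows "norm (w t i j) \<le> phi * CB * (norm (K *v U t i) + norm (K *v U t j))"
proof -
  have "norm (w t i j) = phi * norm (B *v (K *v U t i - K *v U t j))"
    using phi_pos by (simp add: w_def matrix_vector_mult_diff_distrib)
  also have "\<dots> \<le> phi * (CB * norm (K *v U t i - K *v U t j))"
    using assms phi_pos by (intro mult_left_mono) auto
  also have "\<dots> \<le> phi * (CB * (norm (K *v U t i) + norm (K *v U t j)))"
    using assms phi_pos by (intro mult_left_mono norm_triangle_ineq4) auto
  finally show ?thesis by (simp only: mult.assoc)
qed

end

(* ---- part 8 ---- *)
context sync begin

lemma vel_bound: "\<exists>Ld>0. \<forall>t\<ge>0. \<forall>i j. norm (vel t i - vel t j) \<le> Ld"
proof -
  obtain Bd where Bd: "\<And>t i j. t \<ge> 0 \<Longrightarrow> norm (x t i - x t j) \<le> Bd" using d_bound by blast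
  obtain amax where amax: "\<forall>t\<ge>0. \<forall>i j. a (sig t) i j \<le> amax" using a_max by blast
  obtain CK where CK: "CK > 0" "\<And>z. norm (K *v z) \<le> CK * norm z" using mat_bound by blast
  obtain CB where CB: "CB > 0" "\<And>z. norm (B *v z) \<le> CB * norm z" using mat_bound by blast
  obtain CA where CA: "CA > 0" "\<And>z. norm (A *v z) \<le> CA * norm z" using mat_bound by blast
  define E where "E = real CARD('v) * amax * (CK * Bd)"
  have "norm (vel t i - vel t j) \<le> CA * Bd + phi * CB * (E + E)" if t: "t \<ge> 0" for t i j
  proof -
    have Bd0: "Bd \<ge> 0" using Bd[OF t, of i i] by simp
    have KUb: "norm (K *v U t l) \<le> E" for l
      unfolding E_def
    proof (rule KU_bound[OF t _ amax])
      show "0 \<le> CK * Bd" using CK Bd0 by simp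
      fix k show "norm (K *v (x t k - x t l)) \<le> CK * Bd"
        using CK(2)[of "x t k - x t l"] Bd[OF t, of k l] CK(1) by (meson mult_left_mono less_imp_le order_trans)
    qed
    have "norm (vel t i - vel t j) \<le> norm (A *v (x t i - x t j)) + norm (w t i j)"
      unfolding vel_diff by (rule norm_triangle_ineq)
    also have "\<dots> \<le> CA * Bd + phi * CB * (E + E)"
    proof (rule add_mono)
      show "norm (A *v (x t i - x t j)) \<le> CA * Bd"
        using CA(2)[of "x t i - x t j"] Bd[OF t, of i j] CA(1) by (meson mult_left_mono less_imp_le order_trans)
      have "norm (w t i j) \<le> phi * CB * (norm (K *v U t i) + norm (K *v U t j))"
        using CB by (intro w_bound) auto
      also have "\<dots> \<le> phi * CB * (E + E)"
        using phi_pos CB(1) KUb by (intro mult_left_mono add_mono) auto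
      finally show "norm (w t i j) \<le> phi * CB * (E + E)" .
    qed
    finally show ?thesis .
  qed
  then have "\<forall>t\<ge>0. \<forall>i j. norm (vel t i - vel t j) \<le> \<bar>CA * Bd + phi * CB * (E + E)\<bar> + 1"
    by (smt (verit))
  then show ?thesis by (intro exI[of _ "\<bar>CA * Bd + phi * CB * (E + E)\<bar> + 1"]) auto
qed

lemma lip:
  assumes Ld: "\<forall>t\<ge>0. \<forall>i j. norm (vel t i - vel t j) \<le> Ld"
    and C: "C > 0" "\<And>z. norm ((M::real^'n^'p) *v z) \<le> C * norm z"
    and t: "0 \<le> t1" "0 \<le> t2"
  shows "norm (M *v (x t2 i - x t2 j) - M *v (x t1 i - x t1 j)) \<le> C * Ld * \<bar>t2 - t1\<bar>"
proof -
  have main: "norm (M *v (x u2 i - x u2 j) - M *v (x u1 i - x u1 j)) \<le> C * Ld * (u2 - u1)"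
    if u: "0 \<le> u1" "u1 \<le> u2" for u1 u2
  proof (rule rmvt_vec[OF u(2)])
    show "continuous_on {u1..u2} (\<lambda>s. M *v (x s i - x s j))" using u by (intro cont_Pd) auto
    fix s assume s: "s \<in> {u1..<u2}"
    then have s0: "s \<ge> 0" using u by auto
    show "((\<lambda>s. M *v (x s i - x s j)) has_vector_derivative M *v (vel s i - vel s j)) (at s within {s..})"
      by (rule bounded_linear.has_vector_derivative[OF matrix_vector_mul_bounded_linear deriv_d[OF s0]])
    show "norm (M *v (vel s i - vel s j)) \<le> C * Ld"
      using C(2)[of "vel s i - vel s j"] Ld s0 C(1) by (meson mult_left_mono less_imp_le order_trans)
  qed
  show ?thesis
  proof (cases "t1 \<le> t2")
    case True then show ?thesis using main[OF t(1) True] by simp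
  next
    case False
    then show ?thesis using main[OF t(2), of t1] by (simp add: norm_minus_commute)
  qed
qed

lemma Dis_ge: "t \<ge> 0 \<Longrightarrow> a (sig t) i j * (norm (K *v (x t i - x t j)))\<^sup>2 \<le> Dis t"
proof -
  assume t: "t \<ge> 0"
  have nn: "\<And>i j. 0 \<le> a (sig t) i j * (norm (K *v (x t i - x t j)))\<^sup>2"
    using a_nonneg sig_range[OF t] by simp
  have "a (sig t) i j * (norm (K *v (x t i - x t j)))\<^sup>2 \<le> (\<Sum>j\<in>UNIV. a (sig t) i j * (norm (K *v (x t i - x t j)))\<^sup>2)"
    by (rule member_le_sum) (auto simp: nn)
  also have "\<dots> \<le> Dis t" unfolding Dis_def by (rule member_le_sum) (auto intro: sum_nonneg simp: nn)
  finally show ?thesis .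
qed

end

(* ---- part 9 ---- *)
context sync begin

lemma F_tail: "\<eta> > 0 \<Longrightarrow> \<exists>T0\<ge>0. \<forall>t1 t2. T0 \<le> t1 \<longrightarrow> t1 \<le> t2 \<longrightarrow> F t1 - F t2 < \<eta>"
proof -
  assume eta: "\<eta> > 0"
  define Finf where "Finf = Inf (F ` {0..})"
  have ne: "F ` {0..} \<noteq> {}" by auto
  have bdd: "bdd_below (F ` {0..})" using F_nonneg by (auto intro: bdd_belowI[of _ 0])
  have "Inf (F ` {0..}) < Finf + \<eta>" using eta by (simp add: Finf_def)
  then obtain y where y: "y \<in> F ` {0..}" "y < Finf + \<eta>" using cInf_lessD[OF ne] by blast
  then obtain T0 where T0: "T0 \<ge> 0" "F T0 < Finf + \<eta>" by auto
  have "F t1 - F t2 < \<eta>" if "T0 \<le> t1" "t1 \<le> t2" for t1 t2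
  proof -
    have "F t1 \<le> F T0" using F_mono T0(1) that by blast
    moreover have "Finf \<le> F t2" unfolding Finf_def using bdd that T0(1) by (intro cInf_lower) auto
    ultimately show ?thesis using T0 by linarith
  qed
  then show ?thesis using T0(1) by blast
qed

lemma claimA:
  assumes e: "\<epsilon> > 0"
  shows "eventually (\<lambda>t. \<forall>i j. a (sig t) i j > 0 \<longrightarrow> norm (K *v (x t i - x t j)) \<le> \<epsilon>) at_top"
proof -
  obtain Ld where Ld: "Ld > 0" "\<forall>t\<ge>0. \<forall>i j. norm (vel t i - vel t j) \<le> Ld" using vel_bound by blast
  obtain CK where CK: "CK > 0" "\<And>z. norm (K *v z) \<le> CK * norm z" using mat_bound by blast
  obtain amin where amin: "amin > 0" "\<forall>t\<ge>0. \<forall>i j. a (sig t) i j > 0 \<longrightarrow> amin \<le> a (sig t) i j"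
    using a_min by blast
  define Ly where "Ly = CK * Ld"
  have Ly: "Ly > 0" using CK Ld by (simp add: Ly_def)
  define \<delta> where "\<delta> = min (\<epsilon> / (2 * Ly)) (Tmin / 2)"
  have dpos: "\<delta> > 0" using e Ly Tmin_pos by (simp add: \<delta>_def)
  have dT: "\<delta> \<le> Tmin / 2" by (simp add: \<delta>_def)
  have dL: "Ly * \<delta> \<le> \<epsilon> / 2"
  proof -
    have "Ly * \<delta> \<le> Ly * (\<epsilon> / (2 * Ly))" using Ly by (intro mult_left_mono) (auto simp: \<delta>_def)
    then show ?thesis using Ly by simp
  qed
  define m where "m = phi * amin * (\<epsilon>/2)^2"
  have mpos: "m > 0" using phi_pos amin e by (simp add: m_def)
  obtain T0 where T0: "T0 \<ge> 0" "\<And>t1 t2. T0 \<le> t1 \<Longrightarrow> t1 \<le> t2 \<Longrightarrow> F t1 - F t2 < m * \<delta> / 2"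
    using F_tail[of "m * \<delta> / 2"] mpos dpos by auto
  have "\<forall>t\<ge>T0 + Tmin/2. \<forall>i j. a (sig t) i j > 0 \<longrightarrow> norm (K *v (x t i - x t j)) \<le> \<epsilon>"
  proof (intro allI impI)
    fix t i j assume t: "t \<ge> T0 + Tmin/2" and apos: "a (sig t) i j > 0"
    have t0: "t \<ge> 0" using t T0 Tmin_pos by linarith
    show "norm (K *v (x t i - x t j)) \<le> \<epsilon>"
    proof (rule ccontr)
      assume big: "\<not> norm (K *v (x t i - x t j)) \<le> \<epsilon>"
      obtain t' where t': "0 \<le> t'" "t - Tmin/2 \<le> t'" "t' \<le> t" "\<forall>s\<in>{t'..t'+Tmin/2}. sig s = sig t"
        using good_edge[OF t0] by blast
      define \<alpha> where "\<alpha> = max t' (t - \<delta>)"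
      have al: "\<alpha> \<ge> T0" "\<alpha> \<ge> 0" "\<alpha> \<le> t" "t \<le> \<alpha> + \<delta>"
        using t' t dT T0 dpos by (auto simp: \<alpha>_def)
      have alsig: "sig s = sig t" if "s \<in> {\<alpha>..\<alpha>+\<delta>}" for s
      proof -
        have "s \<in> {t'..t'+Tmin/2}" using that dT t' by (auto simp: \<alpha>_def)
        then show ?thesis using t'(4) by blast
      qed
      have "F (\<alpha> + \<delta>) - F \<alpha> \<le> (- m) * ((\<alpha> + \<delta>) - \<alpha>)"
      proof (rule rmvt)
        show "\<alpha> \<le> \<alpha> + \<delta>" using dpos by simp
        show "continuous_on {\<alpha>..\<alpha> + \<delta>} F" using al by (intro F_cont) auto
        fix s assume s: "s \<in> {\<alpha>..<\<alpha> + \<delta>}"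
        then have s0: "s \<ge> 0" using al by auto
        show "(F has_real_derivative F' s) (at s within {s..})" by (rule F_deriv[OF s0])
        have sg: "sig s = sig t" using s by (intro alsig) auto
        have as: "amin \<le> a (sig s) i j" using amin(2) t0 apos sg by auto
        have "norm (K *v (x s i - x s j) - K *v (x t i - x t j)) \<le> CK * Ld * \<bar>s - t\<bar>"
          by (rule lip[OF Ld(2) CK t0 s0])
        also have "\<bar>s - t\<bar> \<le> \<delta>" using s al by auto
        then have "CK * Ld * \<bar>s - t\<bar> \<le> Ly * \<delta>" using Ly unfolding Ly_def by (intro mult_left_mono) auto
        finally have "norm (K *v (x s i - x s j) - K *v (x t i - x t j)) \<le> \<epsilon> / 2" using dL by linarith
        then have ns: "norm (K *v (x s i - x s j)) \<ge> \<epsilon> / 2" using big norm_triangle_ineq2[of "K *v (x t i - x t j)" "K *v (x s i - x s j)"]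
          by (simp add: norm_minus_commute)
        have "amin * (\<epsilon>/2)^2 \<le> a (sig s) i j * (norm (K *v (x s i - x s j)))\<^sup>2"
          using as ns amin(1) e by (intro mult_mono power_mono) auto
        also have "\<dots> \<le> Dis s" by (rule Dis_ge[OF s0])
        finally have "phi * (amin * (\<epsilon>/2)^2) \<le> phi * Dis s" using phi_pos by (intro mult_left_mono) auto
        then show "F' s \<le> - m" using F'_le[OF s0] by (simp add: m_def mult.assoc)
      qed
      then have "F \<alpha> - F (\<alpha> + \<delta>) \<ge> m * \<delta>" by simp
      moreover have "F \<alpha> - F (\<alpha> + \<delta>) < m * \<delta> / 2" using T0(2)[OF al(1)] dpos by simp
      moreover have "m * \<delta> > 0" using mpos dpos by simp
      ultimately show False by linarith
    qed
  qed
  then show ?thesis unfolding eventually_at_top_linorder by blast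
qed

end

(* ---- part 10 ---- *)
primrec APow :: "real^'n^'n \<Rightarrow> nat \<Rightarrow> real^'n^'n" where
  "APow M 0 = mat 1"
| "APow M (Suc k) = APow M k ** M"

lemma funpow_APow: "(((*v) M) ^^ k) z = APow M k *v z"
proof (induction k arbitrary: z)
  case (Suc k)
  have "(((*v) M) ^^ Suc k) z = (((*v) M) ^^ k) (M *v z)"
    by (simp only: funpow_Suc_right o_apply)
  also have "\<dots> = APow M k *v (M *v z)" by (rule Suc)
  finally show ?case by (simp add: matrix_vector_mul_assoc)
qed simp

context sync begin

definition "Lk k = K ** APow A k"

lemma Lk_Suc: "Lk (Suc k) *v z = Lk k *v (A *v z)"
  by (simp add: Lk_def matrix_vector_mul_assoc matrix_mul_assoc)

lemma Lk_0: "Lk 0 = K"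
  by (simp add: Lk_def)

lemma w_small:
  assumes e: "\<epsilon> > 0"
  shows "eventually (\<lambda>t. \<forall>i j. norm (w t i j) \<le> \<epsilon>) at_top"
proof -
  obtain amax0 where amax0: "\<forall>t\<ge>0. \<forall>i j. a (sig t) i j \<le> amax0" using a_max by blast
  define am where "am = max amax0 1"
  have am: "\<forall>t\<ge>0. \<forall>i j. a (sig t) i j \<le> am" "am > 0" using amax0 by (auto simp: am_def intro: le_max_iff_disj[THEN iffD2])
  obtain CB where CB: "CB > 0" "\<And>z. norm (B *v z) \<le> CB * norm z" using mat_bound by blast
  define N where "N = real CARD('v)"
  have N: "N > 0" by (simp add: N_def)
  define e' where "e' = \<epsilon> / (phi * CB * 2 * N * am)"
  have e': "e' > 0" using e phi_pos CB N am by (simp add: e'_def)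
  have "eventually (\<lambda>t. t \<ge> 0 \<and> (\<forall>i j. a (sig t) i j > 0 \<longrightarrow> norm (K *v (x t i - x t j)) \<le> e')) at_top"
    using claimA[OF e'] eventually_ge_at_top[of 0] by (simp add: eventually_conj_iff)
  then show ?thesis
  proof (rule eventually_mono, intro allI)
    fix t i j assume h: "t \<ge> 0 \<and> (\<forall>i j. a (sig t) i j > 0 \<longrightarrow> norm (K *v (x t i - x t j)) \<le> e')"
    have KUb: "norm (K *v U t l) \<le> N * am * e'" for l
      unfolding N_def
    proof (rule KU_bound[OF _ _ am(1)])
      show "t \<ge> 0" "e' \<ge> 0" using h e' by auto
      fix k assume "a (sig t) l k > 0"
      then have "norm (K *v (x t l - x t k)) \<le> e'" using h by blast
      then show "norm (K *v (x t k - x t l)) \<le> e'"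
        by (simp add: matrix_vector_mult_diff_distrib norm_minus_commute)
    qed
    have "norm (w t i j) \<le> phi * CB * (norm (K *v U t i) + norm (K *v U t j))"
      using CB by (intro w_bound) auto
    also have "\<dots> \<le> phi * CB * (N * am * e' + N * am * e')"
      using phi_pos CB(1) KUb by (intro mult_left_mono add_mono) auto
    also have "\<dots> = \<epsilon>" using phi_pos CB(1) N am(2) by (simp add: e'_def field_simps)
    finally show "norm (w t i j) \<le> \<epsilon>" .
  qed
qed

end

(* ---- part 11 ---- *)
context sync begin

definition "good h i j t = (\<forall>s\<in>{t..t+h}. a (sig s) i j > 0)"

lemma SK:
  "h > 0 \<Longrightarrow> \<epsilon> > 0 \<Longrightarrow> eventually (\<lambda>t. \<forall>i j. good h i j t \<longrightarrow> norm (Lk k *v (x t i - x t j)) \<le> \<epsilon>) at_top"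
proof (induction k arbitrary: h \<epsilon>)
  case 0
  show ?case
    using claimA[OF 0(2)]
  proof (rule eventually_mono, intro allI impI)
    fix t i j assume h: "\<forall>i j. 0 < a (sig t) i j \<longrightarrow> norm (K *v (x t i - x t j)) \<le> \<epsilon>" and g: "good h i j t"
    have "a (sig t) i j > 0" using g 0(1) unfolding good_def by auto
    then show "norm (Lk 0 *v (x t i - x t j)) \<le> \<epsilon>" using h by (simp add: Lk_0)
  qed
next
  case (Suc k)
  note hpos = Suc.prems(1) and e = Suc.prems(2)
  obtain Ld where Ld: "Ld > 0" "\<forall>t\<ge>0. \<forall>i j. norm (vel t i - vel t j) \<le> Ld" using vel_bound by blast
  obtain C1 where C1: "C1 > 0" "\<And>z. norm (Lk (Suc k) *v z) \<le> C1 * norm z" using mat_bound by blast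
  obtain C2 where C2: "C2 > 0" "\<And>z. norm (Lk k *v z) \<le> C2 * norm z" using mat_bound by blast
  define \<delta> where "\<delta> = min (h/2) (\<epsilon> / (3 * C1 * Ld))"
  have dpos: "\<delta> > 0" using hpos e C1 Ld by (simp add: \<delta>_def)
  have dh: "\<delta> \<le> h/2" by (simp add: \<delta>_def)
  have dC: "C1 * Ld * \<delta> \<le> \<epsilon> / 3"
  proof -
    have "C1 * Ld * \<delta> \<le> C1 * Ld * (\<epsilon> / (3 * C1 * Ld))" using C1 Ld by (intro mult_left_mono) (auto simp: \<delta>_def)
    then show ?thesis using C1 Ld by simp
  qed
  define \<eta> where "\<eta> = \<epsilon> * \<delta> / 6"
  have eta: "\<eta> > 0" using e dpos by (simp add: \<eta>_def)
  obtain T1 where T1: "\<And>t i j. t \<ge> T1 \<Longrightarrow> good (h/2) i j t \<Longrightarrow> norm (Lk k *v (x t i - x t j)) \<le> \<eta>"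
    using Suc.IH[of "h/2" \<eta>] hpos eta unfolding eventually_at_top_linorder by auto
  have pos2: "\<epsilon> / (3 * C2) > 0" using e C2(1) by simp
  obtain T2 where T2: "\<And>t i j. t \<ge> T2 \<Longrightarrow> norm (w t i j) \<le> \<epsilon> / (3 * C2)"
    using w_small[OF pos2] unfolding eventually_at_top_linorder by blast
  have "\<forall>t \<ge> max (max T1 T2) 0. \<forall>i j. good h i j t \<longrightarrow> norm (Lk (Suc k) *v (x t i - x t j)) \<le> \<epsilon>"
  proof (intro allI impI)
    fix t i j assume t: "t \<ge> max (max T1 T2) 0" and g: "good h i j t"
    have t0: "t \<ge> 0" and tT1: "t \<ge> T1" and tT2: "t \<ge> T2" using t by auto
    have g1: "good (h/2) i j t" using g dh unfolding good_def by auto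
    have g2: "good (h/2) i j (t + \<delta>)" using g dh dpos unfolding good_def by auto
    have y1: "norm (Lk k *v (x t i - x t j)) \<le> \<eta>" by (rule T1[OF tT1 g1])
    have y2: "norm (Lk k *v (x (t+\<delta>) i - x (t+\<delta>) j)) \<le> \<eta>" using tT1 dpos by (intro T1[OF _ g2]) auto
    define c where "c = Lk (Suc k) *v (x t i - x t j)"
    define f where "f = (\<lambda>s. Lk k *v (x s i - x s j) - (s - t) *\<^sub>R c)"
    have "norm (f (t + \<delta>) - f t) \<le> (2 * \<epsilon> / 3) * ((t + \<delta>) - t)"
    proof (rule rmvt_vec[where f' = "\<lambda>s. Lk k *v (vel s i - vel s j) - c"])
      show "t \<le> t + \<delta>" using dpos by simp
      show "continuous_on {t..t + \<delta>} f" unfolding f_def using t0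
        by (intro continuous_intros cont_Pd) auto
      fix s assume s: "s \<in> {t..<t + \<delta>}"
      then have s0: "s \<ge> 0" using t0 by auto
      show "(f has_vector_derivative Lk k *v (vel s i - vel s j) - c) (at s within {s..})"
        unfolding f_def
        apply (rule has_vector_derivative_diff[where f' = "Lk k *v (vel s i - vel s j)" and g' = c, simplified])
         apply (rule bounded_linear.has_vector_derivative[OF matrix_vector_mul_bounded_linear deriv_d[OF s0]])
        using has_vector_derivative_scaleR[OF DERIV_diff[OF DERIV_ident DERIV_const] has_vector_derivative_const]
        by simp
      have eq: "Lk k *v (vel s i - vel s j) - c
          = (Lk (Suc k) *v (x s i - x s j) - Lk (Suc k) *v (x t i - x t j)) + Lk k *v w s i j"
        by (simp add: vel_diff c_def Lk_Suc matrix_vector_right_distrib)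
      have "norm (Lk (Suc k) *v (x s i - x s j) - Lk (Suc k) *v (x t i - x t j)) \<le> C1 * Ld * \<bar>s - t\<bar>"
        by (rule lip[OF Ld(2) C1 t0 s0])
      also have "\<dots> \<le> C1 * Ld * \<delta>" using s C1 Ld by (intro mult_left_mono) auto
      also have "\<dots> \<le> \<epsilon> / 3" by (rule dC)
      finally have n1: "norm (Lk (Suc k) *v (x s i - x s j) - Lk (Suc k) *v (x t i - x t j)) \<le> \<epsilon> / 3" .
      have "norm (Lk k *v w s i j) \<le> C2 * norm (w s i j)" by (rule C2(2))
      also have "\<dots> \<le> C2 * (\<epsilon> / (3 * C2))" using C2(1) T2[of s] tT2 s by (intro mult_left_mono) auto
      also have "\<dots> = \<epsilon> / 3" using C2(1) by simp
      finally have n2: "norm (Lk k *v w s i j) \<le> \<epsilon> / 3" .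
      show "norm (Lk k *v (vel s i - vel s j) - c) \<le> 2 * \<epsilon> / 3"
        unfolding eq using norm_triangle_ineq[of "Lk (Suc k) *v (x s i - x s j) - Lk (Suc k) *v (x t i - x t j)" "Lk k *v w s i j"] n1 n2
        by linarith
    qed
    moreover have "f (t + \<delta>) - f t = Lk k *v (x (t+\<delta>) i - x (t+\<delta>) j) - Lk k *v (x t i - x t j) - \<delta> *\<^sub>R c"
      by (simp add: f_def)
    ultimately have nYD: "norm (Lk k *v (x (t+\<delta>) i - x (t+\<delta>) j) - Lk k *v (x t i - x t j) - \<delta> *\<^sub>R c) \<le> (2 * \<epsilon> / 3) * \<delta>"
      by simp
    have nY: "norm (Lk k *v (x (t+\<delta>) i - x (t+\<delta>) j) - Lk k *v (x t i - x t j))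
        \<le> norm (Lk k *v (x (t+\<delta>) i - x (t+\<delta>) j)) + norm (Lk k *v (x t i - x t j))"
      by (rule norm_triangle_ineq4)
    have nD: "norm (\<delta> *\<^sub>R c) \<le> norm (Lk k *v (x (t+\<delta>) i - x (t+\<delta>) j) - Lk k *v (x t i - x t j))
        + norm (Lk k *v (x (t+\<delta>) i - x (t+\<delta>) j) - Lk k *v (x t i - x t j) - \<delta> *\<^sub>R c)"
      using norm_triangle_sub[of "\<delta> *\<^sub>R c" "Lk k *v (x (t+\<delta>) i - x (t+\<delta>) j) - Lk k *v (x t i - x t j)"]
      by (simp add: norm_minus_commute)
    have "norm (\<delta> *\<^sub>R c) \<le> norm (Lk k *v (x (t+\<delta>) i - x (t+\<delta>) j)) + norm (Lk k *v (x t i - x t j)) + (2 * \<epsilon> / 3) * \<delta>"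
      using nYD nY nD by linarith
    also have "\<dots> \<le> \<eta> + \<eta> + (2 * \<epsilon> / 3) * \<delta>" using y1 y2 by linarith
    also have "\<dots> = \<delta> * \<epsilon>" by (simp add: \<eta>_def field_simps)
    finally have "\<delta> * norm c \<le> \<delta> * \<epsilon>" using dpos by simp
    then show "norm (Lk (Suc k) *v (x t i - x t j)) \<le> \<epsilon>" using dpos by (simp add: c_def)
  qed
  then show ?case unfolding eventually_at_top_linorder by blast
qed

end

(* ---- part 12 ---- *)
context sync begin

lemma obs_lower: "\<exists>c>0. \<forall>v. c * norm v ^ 1 \<le> (\<Sum>k<CARD('n). norm (Lk k *v v))"
proof (rule sphere_lower)
  show "continuous_on UNIV (\<lambda>v. \<Sum>k<CARD('n). norm (Lk k *v v))" by (intro continuous_intros)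
  fix v :: "real^'n" assume v: "v \<noteq> 0"
  show "(\<Sum>k<CARD('n). norm (Lk k *v v)) > 0"
  proof (rule ccontr)
    assume "\<not> ?thesis"
    then have "(\<Sum>k<CARD('n). norm (Lk k *v v)) = 0" by (simp add: less_le sum_nonneg)
    then have "\<forall>k\<in>{..<CARD('n)}. norm (Lk k *v v) = 0" by (subst (asm) sum_nonneg_eq_0_iff) auto
    then have "\<forall>k<CARD('n). (transpose B ** P) *v (((*v) A ^^ k) v) = 0"
      by (simp add: funpow_APow Lk_def K_def matrix_vector_mul_assoc)
    then have "v = 0" using obs unfolding observable_def by blast
    then show False using v by simp
  qed
next
  fix r :: real and v :: "real^'n" assume "r > 0"
  then show "(\<Sum>k<CARD('n). norm (Lk k *v (r *\<^sub>R v))) = r ^ 1 * (\<Sum>k<CARD('n). norm (Lk k *v v))"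
    by (simp add: matrix_vector_mult_scaleR sum_distrib_left)
qed auto

lemma edge_small:
  assumes h: "h > 0" and e: "\<epsilon> > 0"
  shows "eventually (\<lambda>t. \<forall>i j. good h i j t \<longrightarrow> norm (x t i - x t j) \<le> \<epsilon>) at_top"
proof -
  obtain c where c: "c > 0" "\<And>v. c * norm v \<le> (\<Sum>k<CARD('n). norm (Lk k *v v))" using obs_lower by auto
  define n where "n = real CARD('n)"
  have n: "n > 0" by (simp add: n_def)
  define e' where "e' = c * \<epsilon> / n"
  have e': "e' > 0" using c e n by (simp add: e'_def)
  have "\<forall>k\<in>{..<CARD('n)}. eventually (\<lambda>t. \<forall>i j. good h i j t \<longrightarrow> norm (Lk k *v (x t i - x t j)) \<le> e') at_top"
    using SK[OF h e'] by blast
  then have "eventually (\<lambda>t. \<forall>k\<in>{..<CARD('n)}. \<forall>i j. good h i j t \<longrightarrow> norm (Lk k *v (x t i - x t j)) \<le> e') at_top"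
    by (rule eventually_ball_finite[rotated]) simp
  then show ?thesis
  proof (rule eventually_mono, intro allI impI)
    fix t i j assume H: "\<forall>k\<in>{..<CARD('n)}. \<forall>i j. good h i j t \<longrightarrow> norm (Lk k *v (x t i - x t j)) \<le> e'"
      and g: "good h i j t"
    have "c * norm (x t i - x t j) \<le> (\<Sum>k<CARD('n). norm (Lk k *v (x t i - x t j)))" by (rule c(2))
    also have "\<dots> \<le> (\<Sum>k<CARD('n). e')" using H g by (intro sum_mono) auto
    also have "\<dots> = c * \<epsilon>" using n by (simp add: e'_def n_def)
    finally show "norm (x t i - x t j) \<le> \<epsilon>" using c(1) by simp
  qed
qed

end

(* ---- part 13 ---- *)
context sync begin

lemma gronwall:
  assumes e: "e \<ge> 0" and Tw: "Tw \<ge> 0" and wb: "\<And>s. s \<ge> Tw \<Longrightarrow> norm (w s i j) \<le> e"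
    and CA: "CA > 0" "\<And>z. norm (A *v z) \<le> CA * norm z"
    and tau: "\<tau> \<ge> Tw" "t' \<ge> Tw" "\<bar>\<tau> - t'\<bar> \<le> R"
  shows "norm (x \<tau> i - x \<tau> j) \<le> exp ((2*CA+1)*R) * (norm (x t' i - x t' j) + e)"
proof -
  define c where "c = 2*CA+1"
  have c1: "c \<ge> 1" using CA by (simp add: c_def)
  define G where "G s = inner (x s i - x s j) (x s i - x s j) + e^2" for s
  define G' where "G' s = 2 * inner (x s i - x s j) (vel s i - vel s j)" for s
  have Gd: "(G has_real_derivative G' s) (at s within {s..})" if "s \<ge> 0" for s
  proof -
    have "((\<lambda>s. inner (x s i - x s j) (x s i - x s j)) has_real_derivative
        inner (vel s i - vel s j) (x s i - x s j) + inner (x s i - x s j) (vel s i - vel s j)) (at s within {s..})"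
      by (rule vd_inner[OF deriv_d[OF that] deriv_d[OF that]])
    then show ?thesis unfolding G_def G'_def
      by (auto intro!: derivative_eq_intros simp: inner_commute)
  qed
  have Gc: "continuous_on S G" if "S \<subseteq> {0..}" for S
    unfolding G_def using that by (intro continuous_intros cont_d)
  have Gb: "\<bar>G' s\<bar> \<le> c * G s" if "s \<ge> Tw" for s
  proof -
    define d where "d = x s i - x s j"
    have "\<bar>inner d (vel s i - vel s j)\<bar> \<le> norm d * norm (vel s i - vel s j)" by (rule Cauchy_Schwarz_ineq2)
    also have "norm (vel s i - vel s j) \<le> CA * norm d + e"
      unfolding vel_diff d_def using CA(2) wb[OF that] norm_triangle_ineq[of "A *v (x s i - x s j)" "w s i j"]
      by (smt (verit))
    then have "norm d * norm (vel s i - vel s j) \<le> norm d * (CA * norm d + e)" by (intro mult_left_mono) auto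
    finally have h1: "\<bar>G' s\<bar> \<le> 2 * (norm d * (CA * norm d + e))" unfolding G'_def d_def by simp
    have "2 * (norm d * (CA * norm d + e)) \<le> 2 * CA * norm d ^ 2 + norm d ^ 2 + e^2"
      using sum_squares_bound[of "norm d" e] by (simp add: power2_eq_square algebra_simps)
    also have "\<dots> \<le> c * (norm d ^ 2 + e^2)" using c1 unfolding c_def by (simp add: algebra_simps)
    also have "norm d ^ 2 + e^2 = G s" unfolding G_def d_def by (simp add: power2_norm_eq_inner)
    finally show ?thesis using h1 by linarith
  qed
  have key: "G \<tau> \<le> exp (c * R) * G t'"
  proof (cases "t' \<le> \<tau>")
    case True
    define H where "H s = exp (- c * s) * G s" for s
    have "H \<tau> - H t' \<le> 0 * (\<tau> - t')"
    proof (rule rmvt[OF True])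
      show "continuous_on {t'..\<tau>} H" unfolding H_def using tau Tw
        by (intro continuous_intros Gc) auto
      fix s assume s: "s \<in> {t'..<\<tau>}"
      then have s0: "s \<ge> 0" "s \<ge> Tw" using tau Tw by auto
      show "(H has_real_derivative exp (- c * s) * (G' s - c * G s)) (at s within {s..})"
        unfolding H_def using Gd[OF s0(1)]
        by (auto intro!: derivative_eq_intros simp: algebra_simps)
      have "G' s - c * G s \<le> 0" using Gb[OF s0(2)] by linarith
      then show "exp (- c * s) * (G' s - c * G s) \<le> 0" by (simp add: mult_nonneg_nonpos)
    qed
    then have "exp (- c * \<tau>) * G \<tau> \<le> exp (- c * t') * G t'" by (simp add: H_def)
    then have "exp (c * \<tau>) * (exp (- c * \<tau>) * G \<tau>) \<le> exp (c * \<tau>) * (exp (- c * t') * G t')"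
      by (intro mult_left_mono) auto
    moreover have "exp (c * \<tau>) * (exp (- c * \<tau>) * G \<tau>) = G \<tau>"
      by (simp add: mult.assoc[symmetric] exp_add[symmetric])
    moreover have "exp (c * \<tau>) * (exp (- c * t') * G t') = exp (c * (\<tau> - t')) * G t'"
    proof -
      have "exp (c * (\<tau> - t')) = exp (c * \<tau> + (- c * t'))" by (simp add: right_diff_distrib)
      then show ?thesis by (simp add: exp_diff exp_add exp_minus field_simps)
    qed
    ultimately have "G \<tau> \<le> exp (c * (\<tau> - t')) * G t'" by linarith
    also have "\<dots> \<le> exp (c * R) * G t'"
      using tau True c1 by (intro mult_right_mono) (auto simp: G_def)
    finally show ?thesis .
  next
    case False
    then have le: "\<tau> \<le> t'" by simp
    define H where "H s = - (exp (c * s) * G s)" for s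
    have "H t' - H \<tau> \<le> 0 * (t' - \<tau>)"
    proof (rule rmvt[OF le])
      show "continuous_on {\<tau>..t'} H" unfolding H_def using tau Tw
        by (intro continuous_intros Gc) auto
      fix s assume s: "s \<in> {\<tau>..<t'}"
      then have s0: "s \<ge> 0" "s \<ge> Tw" using tau Tw by auto
      show "(H has_real_derivative - (exp (c * s) * (G' s + c * G s))) (at s within {s..})"
        unfolding H_def using Gd[OF s0(1)]
        by (auto intro!: derivative_eq_intros simp: algebra_simps)
      have "G' s + c * G s \<ge> 0" using Gb[OF s0(2)] by linarith
      then show "- (exp (c * s) * (G' s + c * G s)) \<le> 0" by simp
    qed
    then have "exp (c * \<tau>) * G \<tau> \<le> exp (c * t') * G t'" by (simp add: H_def)
    then have "exp (- c * \<tau>) * (exp (c * \<tau>) * G \<tau>) \<le> exp (- c * \<tau>) * (exp (c * t') * G t')"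
      by (intro mult_left_mono) auto
    moreover have "exp (- c * \<tau>) * (exp (c * \<tau>) * G \<tau>) = G \<tau>"
      by (simp add: mult.assoc[symmetric] exp_add[symmetric])
    moreover have "exp (- c * \<tau>) * (exp (c * t') * G t') = exp (c * (t' - \<tau>)) * G t'"
    proof -
      have "exp (c * (t' - \<tau>)) = exp (- c * \<tau> + c * t')" by (simp add: right_diff_distrib)
      then show ?thesis by (simp add: exp_diff exp_add exp_minus field_simps)
    qed
    ultimately have "G \<tau> \<le> exp (c * (t' - \<tau>)) * G t'" by linarith
    also have "\<dots> \<le> exp (c * R) * G t'"
      using tau le c1 by (intro mult_right_mono) (auto simp: G_def)
    finally show ?thesis .
  qed
  define E where "E = exp (c * R)"
  have E1: "E \<ge> 1"
  proof -
    have "R \<ge> 0" using tau by linarith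
    then show ?thesis using c1 unfolding E_def by simp
  qed
  have hG: "G t' \<le> (norm (x t' i - x t' j) + e) ^ 2"
    unfolding G_def using e by (simp add: power2_norm_eq_inner[symmetric] power2_sum)
  have sq: "E * E * (norm (x t' i - x t' j) + e) ^ 2 = (E * (norm (x t' i - x t' j) + e)) ^ 2"
    by (simp only: power2_eq_square mult_ac)
  have "norm (x \<tau> i - x \<tau> j) ^ 2 \<le> G \<tau>" unfolding G_def by (simp add: power2_norm_eq_inner)
  also have "\<dots> \<le> E * G t'" using key by (simp add: E_def)
  also have "\<dots> \<le> E * (norm (x t' i - x t' j) + e) ^ 2" using E1 hG by (intro mult_left_mono) simp_all
  also have "\<dots> \<le> E * E * (norm (x t' i - x t' j) + e) ^ 2"
  proof (rule mult_right_mono)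
    show "E \<le> E * E" using mult_left_mono[of 1 E E] E1 by simp
  qed simp
  also have "\<dots> = (E * (norm (x t' i - x t' j) + e)) ^ 2" by (rule sq)
  finally have "norm (x \<tau> i - x \<tau> j) \<le> E * (norm (x t' i - x t' j) + e)"
  proof (rule power2_le_imp_le)
    show "0 \<le> E * (norm (x t' i - x t' j) + e)" using E1 e by simp
  qed
  then show ?thesis by (simp add: E_def c_def)
qed

end

(* ---- part 14 ---- *)
lemma relpow_bound:
  fixes X :: "'v \<Rightarrow> 'a::real_normed_vector"
  assumes E: "\<forall>(p,q)\<in>R. norm (X p - X q) \<le> \<beta>"
  shows "(p,q) \<in> R^^n \<Longrightarrow> norm (X p - X q) \<le> real n * \<beta>"
proof (induction n arbitrary: q)
  case 0 then show ?case by simp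
next
  case (Suc n)
  then obtain y where y: "(p,y) \<in> R^^n" "(y,q) \<in> R" by auto
  have "norm (X p - X q) \<le> norm (X p - X y) + norm (X y - X q)" using norm_triangle_ineq[of "X p - X y" "X y - X q"] by simp
  also have "\<dots> \<le> real n * \<beta> + \<beta>" using Suc.IH[OF y(1)] E y(2) by (intro add_mono) auto
  finally show ?case by (simp add: algebra_simps)
qed

context sync begin

lemma all_small:
  assumes e: "\<epsilon> > 0"
  shows "eventually (\<lambda>\<tau>. \<forall>p q. norm (x \<tau> p - x \<tau> q) \<le> \<epsilon>) at_top"
proof -
  define M where "M = real (card (UNIV :: ('v \<times> 'v) set))"
  have M0: "M \<ge> 0" by (simp add: M_def)
  define \<beta> where "\<beta> = \<epsilon> / (2 * M + 1)"
  have bpos: "\<beta> > 0" using e M0 by (simp add: \<beta>_def)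
  have b2: "2 * M * \<beta> \<le> \<epsilon>"
  proof -
    have "2 * M * \<beta> \<le> (2 * M + 1) * \<beta>" using bpos by (simp add: algebra_simps)
    also have "\<dots> = \<epsilon>" using M0 by (simp add: \<beta>_def)
    finally show ?thesis .
  qed
  obtain CA where CA: "CA > 0" "\<And>z. norm (A *v z) \<le> CA * norm z" using mat_bound by blast
  define R where "R = T + Tmin"
  define E where "E = exp ((2*CA+1)*R)"
  have Epos: "E > 0" by (simp add: E_def)
  define \<gamma> where "\<gamma> = \<beta> / (2 * E)"
  have gpos: "\<gamma> > 0" using bpos Epos by (simp add: \<gamma>_def)
  have hpos: "Tmin / 2 > 0" using Tmin_pos by simp
  obtain T1 where T1: "\<And>t i j. t \<ge> T1 \<Longrightarrow> good (Tmin/2) i j t \<Longrightarrow> norm (x t i - x t j) \<le> \<gamma>"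
    using edge_small[OF hpos gpos] unfolding eventually_at_top_linorder by blast
  obtain T2 where T2: "\<And>t i j. t \<ge> T2 \<Longrightarrow> norm (w t i j) \<le> \<gamma>"
    using w_small[OF gpos] unfolding eventually_at_top_linorder by blast
  define Tw where "Tw = max (max T1 T2) 0"
  have Tw: "Tw \<ge> 0" "Tw \<ge> T1" "Tw \<ge> T2" by (auto simp: Tw_def)
  have "\<forall>\<tau>\<ge>Tw + Tmin/2. \<forall>p q. norm (x \<tau> p - x \<tau> q) \<le> \<epsilon>"
  proof (intro allI impI)
    fix \<tau> p q assume tau: "\<tau> \<ge> Tw + Tmin/2"
    have tau0: "\<tau> \<ge> 0" "\<tau> \<ge> Tw" using tau Tw hpos by linarith+
    define Ed where "Ed = union_edges a sig {\<tau>..<\<tau> + T}"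
    have edge: "norm (x \<tau> p' - x \<tau> q') \<le> \<beta>" if pq: "(p', q') \<in> Ed" for p' q'
    proof -
      obtain t where t: "t \<in> {\<tau>..<\<tau> + T}" "a (sig t) q' p' > 0"
        using pq unfolding Ed_def union_edges_def by auto
      have t0: "t \<ge> 0" using t tau0 by auto
      obtain t' where t': "0 \<le> t'" "t - Tmin/2 \<le> t'" "t' \<le> t" "\<forall>s\<in>{t'..t'+Tmin/2}. sig s = sig t"
        using good_edge[OF t0] by blast
      have g: "good (Tmin/2) q' p' t'" using t'(4) t(2) unfolding good_def by auto
      have t'T: "t' \<ge> Tw" using t'(2) t(1) tau by auto
      have s1: "norm (x t' q' - x t' p') \<le> \<gamma>" using t'T Tw(2) by (intro T1[OF _ g]) linarith
      have "norm (x \<tau> q' - x \<tau> p') \<le> exp ((2*CA+1)*R) * (norm (x t' q' - x t' p') + \<gamma>)"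
      proof (rule gronwall[OF _ Tw(1) _ CA tau0(2) t'T])
        show "0 \<le> \<gamma>" using gpos by simp
        fix s assume "Tw \<le> s"
        then have "s \<ge> T2" using Tw(3) by linarith
        then show "norm (w s q' p') \<le> \<gamma>" by (rule T2)
      next
        have t1: "\<tau> \<le> t" "t < \<tau> + T" using t(1) by auto
        have "\<tau> - t' \<le> R" using t1 t'(2) hpos T_pos unfolding R_def by linarith
        moreover have "t' - \<tau> \<le> R" using t1 t'(3) hpos T_pos unfolding R_def by linarith
        ultimately show "\<bar>\<tau> - t'\<bar> \<le> R" by (simp add: abs_le_iff)
      qed
      also have "\<dots> \<le> E * (\<gamma> + \<gamma>)" using s1 Epos unfolding E_def by (intro mult_left_mono) auto
      also have "\<dots> = \<beta>" using Epos by (simp add: \<gamma>_def)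
      finally show ?thesis by (simp add: norm_minus_commute)
    qed
    obtain r where r: "\<And>i. i \<noteq> r \<Longrightarrow> (r, i) \<in> Ed\<^sup>+"
      using conn[OF tau0(1)] unfolding has_spanning_tree_def Ed_def by blast
    have finE: "finite Ed" by simp
    have "card Ed \<le> card (UNIV :: ('v \<times> 'v) set)" by (rule card_mono) auto
    then have cardE: "real (card Ed) \<le> M" unfolding M_def by linarith
    have root: "norm (x \<tau> r - x \<tau> i) \<le> M * \<beta>" for i
    proof (cases "i = r")
      case True then show ?thesis using M0 bpos by simp
    next
      case False
      then have "(r, i) \<in> Ed\<^sup>+" by (rule r)
      then obtain n where n: "n \<le> card Ed" "(r, i) \<in> Ed^^n"
        unfolding trancl_finite_eq_relpow[OF finE] by auto
      have "norm (x \<tau> r - x \<tau> i) \<le> real n * \<beta>"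
        by (rule relpow_bound[OF _ n(2)]) (use edge in auto)
      also have "\<dots> \<le> M * \<beta>" using n(1) cardE bpos by (intro mult_right_mono) auto
      finally show ?thesis .
    qed
    have "norm (x \<tau> p - x \<tau> q) \<le> norm (x \<tau> r - x \<tau> p) + norm (x \<tau> r - x \<tau> q)"
      using norm_triangle_ineq[of "x \<tau> p - x \<tau> r" "x \<tau> r - x \<tau> q"]
      by (simp add: norm_minus_commute)
    also have "\<dots> \<le> M * \<beta> + M * \<beta>" using root by (intro add_mono)
    also have "\<dots> \<le> \<epsilon>" using b2 by simp
    finally show "norm (x \<tau> p - x \<tau> q) \<le> \<epsilon>" .
  qed
  then show ?thesis unfolding eventually_at_top_linorder by blast
qed

lemma sync_conv: "((\<lambda>t. norm (x t i - x t j)) \<longlongrightarrow> 0) at_top"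
proof (rule order_tendstoI)
  fix y :: real assume "y < 0"
  then show "eventually (\<lambda>t. y < norm (x t i - x t j)) at_top"
    by (intro always_eventually) (auto intro: order.strict_trans2)
next
  fix y :: real assume y: "0 < y"
  have "eventually (\<lambda>t. \<forall>p q. norm (x t p - x t q) \<le> y/2) at_top" using y by (intro all_small) simp
  then show "eventually (\<lambda>t. norm (x t i - x t j) < y) at_top"
  proof (rule eventually_mono)
    fix t assume "\<forall>p q. norm (x t p - x t q) \<le> y/2"
    then have "norm (x t i - x t j) \<le> y/2" by blast
    then show "norm (x t i - x t j) < y" using y by linarith
  qed
qed

end

theorem theorem3:
  fixes a :: "nat \<Rightarrow> 'v::finite \<Rightarrow> 'v \<Rightarrow> real"
    and Q :: nat
    and sig :: "real \<Rightarrow> nat"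
    and Tmin T phi :: real
    and A :: "real^'n^'n" and B :: "real^'m^'n" and P :: "real^'n^'n"
    and x :: "real \<Rightarrow> 'v \<Rightarrow> real^'n"
  assumes N2: "CARD('v) \<ge> 2"
    and Q1: "Q \<ge> 1"
    and a_nonneg: "\<And>k i j. k \<in> {1..Q} \<Longrightarrow> a k i j \<ge> 0"
    and a_sym: "\<And>k i j. k \<in> {1..Q} \<Longrightarrow> a k i j = a k j i"
    and a_diag: "\<And>k i. k \<in> {1..Q} \<Longrightarrow> a k i i = 0"
    and Tmin_pos: "Tmin > 0"
    and sw: "switching_signal sig Q Tmin"
    and T_pos: "T > 0"
    and conn: "\<And>t0. t0 \<ge> 0 \<Longrightarrow> has_spanning_tree (union_edges a sig {t0..<t0 + T})"
    and stab: "stabilizable A B"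
    and P_sym: "transpose P = P"
    and P_pd: "pos_def P"
    and lyap: "neg_semidef (transpose A ** P + P ** A)"
    and obs: "observable (transpose B ** P) A"
    and phi_pos: "phi > 0"
    and x_cont: "continuous_on {0..} x"
    and x_ode: "\<And>i t. t \<ge> 0 \<Longrightarrow>
        ((\<lambda>s. x s i) has_vector_derivative
           (A *v x t i + phi *\<^sub>R ((B ** (transpose B ** P)) *v
              (\<Sum>j\<in>UNIV. a (sig t) i j *\<^sub>R (x t j - x t i)))))
         (at t within {t..})"
  shows "\<forall>i j. ((\<lambda>t. norm (x t i - x t j)) \<longlongrightarrow> 0) at_top"
proof -
  interpret sync a Q sig Tmin T phi A B P x
    using a_nonneg a_sym Tmin_pos sw T_pos conn P_sym P_pd lyap obs phi_pos x_cont x_ode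
    by unfold_locales blast+
  show ?thesis using sync_conv by blast
qed

end
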